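(* Let $\tilde L$ be a minimum-size counterexample. Then every element $x\in\tilde L\setminus\{0_{\tilde L},1_{\tilde L}\}$ is comparable with at least four elements of $\tilde L\setminus\{x\}$.
   Context: For a poset $P$, $x$ upper covers $y$ if $y<x$ with nothing strictly between; join-irreducible: upper covers exactly one element. For $x\in P$, ${\uparrow}x=\{y: x\le y\}$. $0_{\tilde L}$ and $1_{\tilde L}$ denote the least and greatest elements. A counterexample is a finite lattice $L$ with $|L|>1$ in which every join-irreducible $j$ satisfies $|{\uparrow}j|>|L|/2$; a minimum-size counterexample is a counterexample $\tilde L$ such that no counterexample has fewer elements. *)

theory Defs
  imports "HOL-Algebra.Lattice"
begin

(* Finite lattices are HOL-Algebra lattices (record 'a gorder with carrier and le,
   locale lattice, which includes partial_order, i.e. eq is equality). *)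

definition upper_covers :: "'a gorder \<Rightarrow> 'a \<Rightarrow> 'a \<Rightarrow> bool" where
  "upper_covers L x y \<longleftrightarrow> x \<in> carrier L \<and> y \<in> carrier L \<and> y \<sqsubseteq>\<^bsub>L\<^esub> x \<and> y \<noteq> x \<and>
     \<not> (\<exists>z \<in> carrier L. y \<sqsubseteq>\<^bsub>L\<^esub> z \<and> z \<noteq> y \<and> z \<sqsubseteq>\<^bsub>L\<^esub> x \<and> z \<noteq> x)"

definition join_irreducible :: "'a gorder \<Rightarrow> 'a \<Rightarrow> bool" where
  "join_irreducible L j \<longleftrightarrow> j \<in> carrier L \<and> (\<exists>!y. upper_covers L j y)"

definition up_set :: "'a gorder \<Rightarrow> 'a \<Rightarrow> 'a set" where
  "up_set L x = {y \<in> carrier L. x \<sqsubseteq>\<^bsub>L\<^esub> y}"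

definition counterexample :: "'a gorder \<Rightarrow> bool" where
  "counterexample L \<longleftrightarrow> lattice L \<and> finite (carrier L) \<and> card (carrier L) > 1 \<and>
     (\<forall>j. join_irreducible L j \<longrightarrow> 2 * card (up_set L j) > card (carrier L))"

(* Every finite lattice is isomorphic to one whose carrier is a subset of nat,
   so quantifying over lattices on nat covers all finite lattices up to isomorphism. *)
definition min_counterexample :: "'a gorder \<Rightarrow> bool" where
  "min_counterexample L \<longleftrightarrow> counterexample L \<and>
     (\<forall>M :: nat gorder. counterexample M \<longrightarrow> card (carrier L) \<le> card (carrier M))"

end

theory Submission
  imports Defs
begin

locale lat0 = lattice L for L :: "'a gorder" (structure)
begin

lemma fin_bottom:
  assumes "finite (carrier L)" "carrier L \<noteq> {}"
  shows "least L \<bottom> (carrier L)"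
proof -
  have g: "greatest L (\<Sqinter>(carrier L)) (Lower L (carrier L))"
    by (rule finite_inf_greatest) (use assms in auto)
  have "\<Sqinter>(carrier L) \<in> carrier L" using assms by simp
  then have "least L (\<Sqinter>(carrier L)) (carrier L)"
    using g by (auto simp: least_def greatest_def Lower_def)
  then have "\<exists>x. least L x (carrier L)" by blast
  then show ?thesis unfolding bottom_def by (rule someI_ex)
qed

lemma fin_top:
  assumes "finite (carrier L)" "carrier L \<noteq> {}"
  shows "greatest L \<top> (carrier L)"
proof -
  have g: "least L (\<Squnion>(carrier L)) (Upper L (carrier L))"
    by (rule finite_sup_least) (use assms in auto)
  have "\<Squnion>(carrier L) \<in> carrier L" using assms by simp
  then have "greatest L (\<Squnion>(carrier L)) (carrier L)"
    using g by (auto simp: least_def greatest_def Upper_def)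
  then have "\<exists>x. greatest L x (carrier L)" by blast
  then show ?thesis unfolding top_def by (rule someI_ex)
qed

lemma JI_intro:
  assumes "j \<in> carrier L" "c \<in> carrier L" "c \<sqsubseteq> j" "c \<noteq> j"
    and "\<And>z. z \<in> carrier L \<Longrightarrow> z \<sqsubseteq> j \<Longrightarrow> z \<noteq> j \<Longrightarrow> z \<sqsubseteq> c"
  shows "join_irreducible L j"
proof -
  have cov: "upper_covers L j c"
    unfolding upper_covers_def using assms le_antisym by blast
  have "y = c" if "upper_covers L j y" for y
  proof -
    from that have y: "y \<in> carrier L" "y \<sqsubseteq> j" "y \<noteq> j"
      and nb: "\<not> (\<exists>z \<in> carrier L. y \<sqsubseteq> z \<and> z \<noteq> y \<and> z \<sqsubseteq> j \<and> z \<noteq> j)"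
      unfolding upper_covers_def by auto
    have "y \<sqsubseteq> c" using assms(5) y by blast
    then show "y = c" using nb assms by blast
  qed
  then show ?thesis unfolding join_irreducible_def using cov assms(1) by blast
qed

lemma main:
  assumes ce: "counterexample L"
    and x: "x \<in> carrier L - {\<bottom>, \<top>}"
  shows "card {y \<in> carrier L - {x}. x \<sqsubseteq> y \<or> y \<sqsubseteq> x} \<ge> 4"
proof (rule ccontr)
  define C where "C = {y \<in> carrier L - {x}. x \<sqsubseteq> y \<or> y \<sqsubseteq> x}"
  define n where "n = card (carrier L)"
  assume "\<not> card {y \<in> carrier L - {x}. x \<sqsubseteq> y \<or> y \<sqsubseteq> x} \<ge> 4"
  then have cC: "card C \<le> 3" unfolding C_def by simp
  have fin: "finite (carrier L)" and n1: "n > 1"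
    and JIc: "\<And>j. join_irreducible L j \<Longrightarrow> 2 * card (up_set L j) > n"
    using ce unfolding counterexample_def n_def by auto
  have ne: "carrier L \<noteq> {}" using n1 n_def by auto
  have finC: "finite C" unfolding C_def using fin by simp
  have bl: "\<bottom> \<in> carrier L" "\<And>z. z \<in> carrier L \<Longrightarrow> \<bottom> \<sqsubseteq> z"
    using fin_bottom[OF fin ne] by (auto simp: least_def)
  have tg: "\<top> \<in> carrier L" "\<And>z. z \<in> carrier L \<Longrightarrow> z \<sqsubseteq> \<top>"
    using fin_top[OF fin ne] by (auto simp: greatest_def)
  have xc: "x \<in> carrier L" "x \<noteq> \<bottom>" "x \<noteq> \<top>" using x by auto
  have topI: "z = \<top>" if "z \<in> carrier L" "\<top> \<sqsubseteq> z" for z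
    using le_antisym[OF that(2) tg(2)[OF that(1)] tg(1) that(1)] by simp
  have botI: "z = \<bottom>" if "z \<in> carrier L" "z \<sqsubseteq> \<bottom>" for z
    using le_antisym[OF that(2) bl(2)[OF that(1)] that(1) bl(1)] .
  have bt: "\<bottom> \<noteq> \<top>"
  proof
    assume bt: "\<bottom> = \<top>"
    have "carrier L \<subseteq> {\<bottom>}"
    proof
      fix z assume z: "z \<in> carrier L"
      have "z \<sqsubseteq> \<bottom>" using tg(2)[OF z] bt by simp
      then show "z \<in> {\<bottom>}" using botI[OF z] by simp
    qed
    then have "n \<le> 1" unfolding n_def using card_mono[of "{\<bottom>}"] by simp
    then show False using n1 by simp
  qed
  have upt: "up_set L \<top> = {\<top>}" unfolding up_set_def using tg topI by auto
  have tnotJI: "\<not> join_irreducible L \<top>"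
  proof
    assume "join_irreducible L \<top>"
    from JIc[OF this] upt n1 show False by simp
  qed
  have bC: "\<bottom> \<in> C" and tC: "\<top> \<in> C" unfolding C_def using bl tg xc by auto
  have cardge: "\<And>S. S \<subseteq> carrier L \<Longrightarrow> card S \<le> n"
    unfolding n_def using fin card_mono by blast
  have Ceq3: "C = {\<bottom>, y, \<top>}" if "y \<in> C" "y \<noteq> \<bottom>" "y \<noteq> \<top>" for y
  proof -
    have sub: "{\<bottom>, y, \<top>} \<subseteq> C" using bC tC that by auto
    moreover have c3: "card {\<bottom>, y, \<top>} = 3" using that bt by auto
    moreover have "card {\<bottom>, y, \<top>} \<le> card C" using card_mono[OF finC sub] .
    ultimately have "card {\<bottom>, y, \<top>} = card C" using cC by simp
    then show ?thesis using card_subset_eq[OF finC sub] by simp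
  qed
  show False
  proof (cases "\<exists>y\<in>carrier L. y \<sqsubseteq> x \<and> y \<noteq> x \<and> y \<noteq> \<bottom>")
    case True
    then obtain y where y: "y \<in> carrier L" "y \<sqsubseteq> x" "y \<noteq> x" "y \<noteq> \<bottom>" by blast
    have yt: "y \<noteq> \<top>"
    proof
      assume "y = \<top>"
      then have "x = \<top>" using topI[OF xc(1)] y by simp
      then show False using xc by simp
    qed
    have yC: "y \<in> C" unfolding C_def using y by auto
    have Ceq: "C = {\<bottom>, y, \<top>}" using Ceq3[OF yC y(4) yt] .
    have "join_irreducible L x"
    proof (rule JI_intro[OF xc(1) y(1,2,3)])
      fix z assume z: "z \<in> carrier L" "z \<sqsubseteq> x" "z \<noteq> x"
      then have "z \<in> C" unfolding C_def by auto
      then have "z = \<bottom> \<or> z = y \<or> z = \<top>" using Ceq by auto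
      moreover have "z \<noteq> \<top>" using z topI[OF xc(1)] by auto
      ultimately show "z \<sqsubseteq> y" using bl(2)[OF y(1)] y(1) by auto
    qed
    then have h: "2 * card (up_set L x) > n" by (rule JIc)
    have "up_set L x \<subseteq> {x, \<top>}"
    proof
      fix z assume "z \<in> up_set L x"
      then have z: "z \<in> carrier L" "x \<sqsubseteq> z" unfolding up_set_def by auto
      show "z \<in> {x, \<top>}"
      proof (cases "z = x")
        case False
        then have "z \<in> C" using z unfolding C_def by auto
        then have "z = \<bottom> \<or> z = y \<or> z = \<top>" using Ceq by auto
        moreover have "z \<noteq> \<bottom>" using z botI[OF xc(1)] xc by auto
        moreover have "z \<noteq> y" using z y le_antisym[OF y(2) _ y(1) xc(1)] by auto
        ultimately show ?thesis by auto
      qed simp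
    qed
    then have "card (up_set L x) \<le> card {x, \<top>}"
      by (rule card_mono[rotated]) simp
    also have "\<dots> \<le> 2" by (simp add: card_insert_le_m1)
    finally have "card (up_set L x) \<le> 2" .
    moreover have "card {\<bottom>, y, x, \<top>} = 4" using y yt bt xc by auto
    moreover have "card {\<bottom>, y, x, \<top>} \<le> n" using cardge bl y xc tg by auto
    ultimately show False using h by simp
  next
    case False
    then have atom: "\<And>z. z \<in> carrier L \<Longrightarrow> z \<sqsubseteq> x \<Longrightarrow> z \<noteq> x \<Longrightarrow> z \<sqsubseteq> \<bottom>"
      using bl by auto
    have "join_irreducible L x"
      by (rule JI_intro[OF xc(1) bl(1) bl(2)[OF xc(1)]]) (use xc atom in auto)
    then have h: "2 * card (up_set L x) > n" by (rule JIc)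
    show False
    proof (cases "\<exists>y\<in>carrier L. x \<sqsubseteq> y \<and> y \<noteq> x \<and> y \<noteq> \<top>")
      case True
      then obtain y where y: "y \<in> carrier L" "x \<sqsubseteq> y" "y \<noteq> x" "y \<noteq> \<top>" by blast
      have yb: "y \<noteq> \<bottom>" using y botI[OF xc(1)] xc by auto
      have yC: "y \<in> C" unfolding C_def using y by auto
      have Ceq: "C = {\<bottom>, y, \<top>}" using Ceq3[OF yC yb y(4)] .
      have upx: "up_set L x \<subseteq> {x, y, \<top>}"
      proof
        fix z assume "z \<in> up_set L x"
        then have z: "z \<in> carrier L" "x \<sqsubseteq> z" unfolding up_set_def by auto
        show "z \<in> {x, y, \<top>}"
        proof (cases "z = x")
          case False
          then have "z \<in> C" using z unfolding C_def by auto
          then have "z = \<bottom> \<or> z = y \<or> z = \<top>" using Ceq by auto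
          moreover have "z \<noteq> \<bottom>" using z botI[OF xc(1)] xc by auto
          ultimately show ?thesis by auto
        qed simp
      qed
      have "card (up_set L x) \<le> card {x, y, \<top>}"
        using upx by (rule card_mono[rotated]) simp
      also have "\<dots> \<le> 3" by (simp add: card_insert_le_m1)
      finally have n5: "n \<le> 5" using h by simp
      have yJI: "\<not> join_irreducible L y"
      proof
        assume "join_irreducible L y"
        then have hy: "2 * card (up_set L y) > n" by (rule JIc)
        have "up_set L y \<subseteq> {y, \<top>}"
        proof
          fix z assume "z \<in> up_set L y"
          then have z: "z \<in> carrier L" "y \<sqsubseteq> z" unfolding up_set_def by auto
          then have xz: "x \<sqsubseteq> z" using le_trans[OF y(2) z(2) xc(1) y(1) z(1)] by simp
          then have "z \<in> up_set L x" using z unfolding up_set_def by auto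
          then have "z \<in> {x, y, \<top>}" using upx by auto
          moreover have "z \<noteq> x" using z y le_antisym[OF y(2) _ xc(1) y(1)] by auto
          ultimately show "z \<in> {y, \<top>}" by auto
        qed
        then have "card (up_set L y) \<le> card {y, \<top>}"
          by (rule card_mono[rotated]) simp
        also have "\<dots> \<le> 2" by (simp add: card_insert_le_m1)
        finally have "card (up_set L y) \<le> 2" .
        moreover have "card {\<bottom>, x, y, \<top>} = 4" using y yb bt xc by auto
        moreover have "card {\<bottom>, x, y, \<top>} \<le> n" using cardge bl y xc tg by auto
        ultimately show False using hy by simp
      qed
      obtain w where w: "w \<in> carrier L" "w \<sqsubseteq> y" "w \<noteq> y" "\<not> w \<sqsubseteq> x"
        using JI_intro[OF y(1) xc(1) y(2)] y(3) yJI by blast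
      have wd1: "w \<noteq> \<bottom>" using w bl(2)[OF xc(1)] by auto
      have wd2: "w \<noteq> x" using w xc by auto
      have wd3: "w \<noteq> \<top>" using w topI[OF y(1)] y by auto
      have c5: "card {\<bottom>, x, y, \<top>, w} = 5" using y yb bt xc wd1 wd2 wd3 w by auto
      have sub: "{\<bottom>, x, y, \<top>, w} \<subseteq> carrier L" using bl y xc tg w by auto
      have "card (carrier L) \<le> card {\<bottom>, x, y, \<top>, w}" using c5 n5 n_def by simp
      then have Leq: "carrier L = {\<bottom>, x, y, \<top>, w}"
        using card_seteq[OF fin sub] by simp
      have "join_irreducible L \<top>"
      proof (rule JI_intro[OF tg(1) y(1) tg(2)[OF y(1)] y(4)])
        fix z assume z: "z \<in> carrier L" "z \<sqsubseteq> \<top>" "z \<noteq> \<top>"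
        then have "z = \<bottom> \<or> z = x \<or> z = y \<or> z = w" using Leq by auto
        then show "z \<sqsubseteq> y" using bl(2)[OF y(1)] y w by auto
      qed
      then show False using tnotJI by simp
    next
      case False
      have "up_set L x \<subseteq> {x, \<top>}" unfolding up_set_def using False by auto
      then have "card (up_set L x) \<le> card {x, \<top>}"
        by (rule card_mono[rotated]) simp
      also have "\<dots> \<le> 2" by (simp add: card_insert_le_m1)
      finally have n3: "n \<le> 3" using h by simp
      have c3: "card {\<bottom>, x, \<top>} = 3" using bt xc by auto
      have sub: "{\<bottom>, x, \<top>} \<subseteq> carrier L" using bl xc tg by auto
      have "card (carrier L) \<le> card {\<bottom>, x, \<top>}" using c3 n3 n_def by simp
      then have Leq: "carrier L = {\<bottom>, x, \<top>}"
        using card_seteq[OF fin sub] by simp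
      have "join_irreducible L \<top>"
      proof (rule JI_intro[OF tg(1) xc(1) tg(2)[OF xc(1)] xc(3)])
        fix z assume z: "z \<in> carrier L" "z \<sqsubseteq> \<top>" "z \<noteq> \<top>"
        then have "z = \<bottom> \<or> z = x" using Leq by auto
        then show "z \<sqsubseteq> x" using bl(2)[OF xc(1)] xc by auto
      qed
      then show False using tnotJI by simp
    qed
  qed
qed

end

theorem mainTheorem12:
  fixes L :: "'a gorder"
  assumes "min_counterexample L"
    and "x \<in> carrier L - {\<bottom>\<^bsub>L\<^esub>, \<top>\<^bsub>L\<^esub>}"
  shows "card {y \<in> carrier L - {x}. x \<sqsubseteq>\<^bsub>L\<^esub> y \<or> y \<sqsubseteq>\<^bsub>L\<^esub> x} \<ge> 4"
proof -
  have ce: "counterexample L" using assms(1) unfolding min_counterexample_def by simp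
  then have "lattice L" unfolding counterexample_def by simp
  then show ?thesis using lat0.main[OF _ ce assms(2)] lat0.intro by blast
qed

end
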